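(* Let $p$ be a prime with $p \equiv \pm 3 \pmod{10}$, and let $G = \mathrm{PSL}(2,p^2)$. If $m(G) = 3$, then $G$ fails the replacement property.
   Context: For a finite group $G$, a finite sequence $s=(g_1,\dots,g_k)$ of elements of $G$ is an irredundant generating sequence if $\langle g_1,\dots,g_k\rangle = G$ and $g_i \notin \langle g_j : j \neq i\rangle$ for every $i$. $m(G)$ denotes the maximal length of an irredundant generating sequence of $G$. An irredundant generating sequence $s=(g_1,\dots,g_k)$ satisfies the replacement property if for every nontrivial $g \in G$ there is an index $i$ such that $(g_1,\dots,g_{i-1},g,g_{i+1},\dots,g_k)$ generates $G$ (not necessarily irredundantly). $G$ satisfies the replacement property if every irredundant generating sequence of length $m(G)$ satisfies it; $G$ fails the replacement property otherwise. *)

theory Defs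
  imports "HOL-Analysis.Analysis" "HOL-Algebra.Algebra"
begin

definition irredundant_gen_seq :: "('a, 'b) monoid_scheme \<Rightarrow> 'a list \<Rightarrow> bool" where
  "irredundant_gen_seq G s \<longleftrightarrow>
     set s \<subseteq> carrier G \<and>
     generate G (set s) = carrier G \<and>
     (\<forall>i < length s. s ! i \<notin> generate G {s ! j | j. j < length s \<and> j \<noteq> i})"

definition max_irr_len :: "('a, 'b) monoid_scheme \<Rightarrow> nat" where
  "max_irr_len G = Max {length s | s. irredundant_gen_seq G s}"

definition seq_replacement :: "('a, 'b) monoid_scheme \<Rightarrow> 'a list \<Rightarrow> bool" where
  "seq_replacement G s \<longleftrightarrow>
     (\<forall>g \<in> carrier G. g \<noteq> \<one>\<^bsub>G\<^esub> \<longrightarrow>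
        (\<exists>i < length s. generate G (set (s[i := g])) = carrier G))"

definition replacement_property :: "('a, 'b) monoid_scheme \<Rightarrow> bool" where
  "replacement_property G \<longleftrightarrow>
     (\<forall>s. irredundant_gen_seq G s \<and> length s = max_irr_len G \<longrightarrow> seq_replacement G s)"

definition SL2 :: "('a::field ^ 2 ^ 2) monoid" where
  "SL2 = \<lparr>carrier = {A. det A = 1}, mult = (**), one = mat 1\<rparr>"

definition PSL2 :: "('a::field ^ 2 ^ 2) set monoid" where
  "PSL2 = SL2 Mod {mat 1, - mat 1}"

end

theory Submission
  imports Defs
begin



definition fring :: "'a::field ring" where
  "fring = \<lparr>carrier = UNIV, monoid.mult = (\<lambda>x y. x * y), one = 1, ring.zero = 0, add = (\<lambda>x y. x + y)\<rparr>"

lemma field_fring: "field (fring :: 'a::field ring)"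
proof -
  have "\<exists>y. x + y = 0" for x :: 'a
    using add.right_inverse by blast
  moreover have "x \<noteq> 0 \<Longrightarrow> \<exists>y. x * y = 1" for x :: 'a
    by (rule exI[of _ "inverse x"]) auto
  ultimately show ?thesis
    unfolding fring_def using add.right_inverse
    by unfold_locales (auto simp:algebra_simps Units_def)
qed

lemma pow_fring: "x [^]\<^bsub>fring\<^esub> (n::nat) = (x::'a::field) ^ n"
  by (induct n) (simp_all add: fring_def mult.commute)

lemma gen_exists:
  "\<exists>w::'a::{field,finite}. w \<noteq> 0 \<and> (\<forall>x. x \<noteq> 0 \<longrightarrow> (\<exists>n. x = w ^ n)) \<and>
     (\<forall>k. w ^ k = 1 \<longleftrightarrow> (CARD('a) - 1) dvd k)"
proof -
  interpret R: field "fring :: 'a ring" by (rule field_fring)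
  have fin: "finite (carrier (fring :: 'a ring))" by (simp add: fring_def)
  obtain a where a: "a \<in> carrier (Multiplicative_Group.mult_of (fring::'a ring))"
    and ca: "carrier (Multiplicative_Group.mult_of (fring::'a ring)) = {a[^]\<^bsub>fring\<^esub>i | i::nat . i \<in> UNIV}"
    using R.finite_field_mult_group_has_gen[OF fin] by blast
  interpret G: group "Multiplicative_Group.mult_of (fring::'a ring)" by (rule R.field_mult_group)
  have pw: "a [^]\<^bsub>Multiplicative_Group.mult_of fring\<^esub> (n::nat) = a ^ n" for n
    using Multiplicative_Group.nat_pow_mult_of[of fring] pow_fring by metis
  have car: "carrier (Multiplicative_Group.mult_of (fring::'a ring)) = UNIV - {0}"
    by (simp add: fring_def)
  have finG: "finite (carrier (Multiplicative_Group.mult_of (fring::'a ring)))" by (simp add: car)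
  have "{a[^]\<^bsub>Multiplicative_Group.mult_of fring\<^esub>x | x. x \<in> (UNIV :: nat set)} = {a[^]\<^bsub>Multiplicative_Group.mult_of fring\<^esub>x | x. x \<in> {0 .. G.ord a - 1}}"
    by (rule G.ord_elems[OF finG a])
  hence "carrier (Multiplicative_Group.mult_of (fring::'a ring)) = (\<lambda>x. a[^]\<^bsub>Multiplicative_Group.mult_of fring\<^esub>x) ` {0 .. G.ord a - 1}"
    using ca by (auto simp: Multiplicative_Group.nat_pow_mult_of)
  hence "card (carrier (Multiplicative_Group.mult_of (fring::'a ring))) \<le> card {0 .. G.ord a - 1}"
    by (metis card_image_le finite_atLeastAtMost)
  moreover have "G.ord a \<ge> 1" using G.ord_ge_1[OF finG a] by simp
  ultimately have le1: "order (Multiplicative_Group.mult_of (fring::'a ring)) \<le> G.ord a"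
    by (simp add: order_def)
  have le2: "G.ord a \<le> order (Multiplicative_Group.mult_of (fring::'a ring))"
    by (rule G.ord_le_group_order[OF finG a])
  have ordc: "G.ord a = CARD('a) - 1"
    using le1 le2 by (simp add: order_def car card_Diff_singleton fring_def)
  have an0: "a \<noteq> 0" using a car by auto
  show ?thesis
  proof (intro exI[of _ a] conjI allI impI)
    show "a \<noteq> 0" by fact
    fix x :: 'a assume "x \<noteq> 0"
    hence "x \<in> carrier (Multiplicative_Group.mult_of (fring::'a ring))" by (simp add: fring_def)
    thus "\<exists>n. x = a ^ n" using ca by (auto simp: pow_fring)
  next
    fix k
    show "a ^ k = 1 \<longleftrightarrow> (CARD('a) - 1) dvd k"
      using G.pow_eq_id[OF a, of k] unfolding pw ordc Multiplicative_Group.one_mult_of by (simp add: fring_def)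
  qed
qed


lemma char_pos: "CHAR('a::{field,finite}) > 0"
proof -
  have "\<not> inj (of_nat :: nat \<Rightarrow> 'a)"
  proof
    assume "inj (of_nat :: nat \<Rightarrow> 'a)"
    moreover have "finite (range (of_nat :: nat \<Rightarrow> 'a))" by simp
    ultimately have "finite (UNIV :: nat set)" using finite_imageD by blast
    thus False by simp
  qed
  then obtain m n where mn: "m \<noteq> n" "(of_nat m :: 'a) = of_nat n" unfolding inj_def by blast
  have "\<exists>k>0. CHAR('a) dvd k"
  proof (cases "m < n")
    case True thus ?thesis using mn of_nat_eq_iff_char_dvd[OF True] by (intro exI[of _ "n - m"]) auto
  next
    case False hence "n < m" using mn by auto
    thus ?thesis using mn of_nat_eq_iff_char_dvd[of n m] by (intro exI[of _ "m - n"]) auto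
  qed
  thus ?thesis by (metis dvd_0_left_iff gr0I)
qed

lemma Ints_neq_UNIV:
  assumes "CARD('a::{field,finite}) = p ^ 2" "Factorial_Ring.prime p"
  shows "(\<int> :: 'a set) \<noteq> UNIV"
proof
  assume U: "(\<int> :: 'a set) = UNIV"
  define c where "c = CHAR('a)"
  have c0: "c > 0" unfolding c_def by (rule char_pos)
  have "UNIV \<subseteq> (of_nat ` {..<c} :: 'a set)"
  proof
    fix x :: 'a
    have "x \<in> \<int>" using U by simp
    then obtain z where z: "x = of_int z" by (auto elim: Ints_cases)
    have e: "z mod int c - z = - (z div int c * int c)"
      using div_mult_mod_eq[of z "int c"] by linarith
    have "(of_int (z mod int c - z) :: 'a) = 0"
      unfolding of_int_eq_0_iff_char_dvd c_def[symmetric] e by simp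
    hence "x = of_int (z mod int c)" using z by simp
    also have "z mod int c = int (nat (z mod int c))" using c0 by simp
    finally have "x = of_nat (nat (z mod int c))" by (metis of_int_of_nat_eq)
    moreover have "nat (z mod int c) < c" using c0 by (simp add: nat_less_iff)
    ultimately show "x \<in> of_nat ` {..<c}" by blast
  qed
  moreover have "inj_on (of_nat :: nat \<Rightarrow> 'a) {..<c}"
  proof (rule inj_onI)
    fix m n assume mn: "m \<in> {..<c}" "n \<in> {..<c}" "(of_nat m :: 'a) = of_nat n"
    show "m = n"
    proof (rule ccontr)
      assume "m \<noteq> n"
      hence "m < n \<or> n < m" by auto
      thus False
      proof
        assume "m < n"
        hence "c dvd n - m" using mn(3) of_nat_eq_iff_char_dvd[of m n] c_def by auto
        hence "c \<le> n - m" using \<open>m < n\<close> by (intro dvd_imp_le) auto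
        thus False using mn(2) by auto
      next
        assume "n < m"
        hence "c dvd m - n" using mn(3) of_nat_eq_iff_char_dvd[of n m] c_def by auto
        hence "c \<le> m - n" using \<open>n < m\<close> by (intro dvd_imp_le) auto
        thus False using mn(1) by auto
      qed
    qed
  qed
  ultimately have "card (UNIV :: 'a set) = c"
  proof -
    assume a1: "UNIV \<subseteq> (of_nat ` {..<c} :: 'a set)" and a2: "inj_on (of_nat :: nat \<Rightarrow> 'a) {..<c}"
    have "(of_nat ` {..<c} :: 'a set) = UNIV" using a1 by blast
    hence "card (UNIV :: 'a set) = card (of_nat ` {..<c} :: 'a set)" by simp
    also have "\<dots> = c" using card_image[OF a2] by simp
    finally show ?thesis .
  qed
  hence "Factorial_Ring.prime (p ^ 2)" using assms(1) prime_CHAR_semidom[OF char_pos] c_def by simp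
  thus False using assms(2) by (simp add: prime_power_iff)
qed


lemma Ints_inverse:
  assumes "x \<in> (\<int> :: 'a::{field,finite} set)" "x \<noteq> 0"
  shows "inverse x \<in> (\<int> :: 'a set)"
proof -
  have "(\<lambda>y. x * y) ` \<int> = (\<int> :: 'a set)"
  proof (rule endo_inj_surj)
    show "finite (\<int> :: 'a set)" by simp
    show "(\<lambda>y. x * y) ` \<int> \<subseteq> \<int>" using assms by auto
    show "inj_on (\<lambda>y. x * y) \<int>" using assms by (auto intro: inj_onI)
  qed
  moreover have "(1::'a) \<in> \<int>" by simp
  ultimately obtain y where "y \<in> \<int>" "x * y = 1" by (metis imageE)
  hence "inverse x = y" using assms(2) by (metis inverse_unique)
  thus ?thesis using \<open>y \<in> \<int>\<close> by simp
qed

lemma field_facts: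
  assumes card: "CARD('a) = p ^ 2" and pr: "Factorial_Ring.prime p" and od: "odd p"
  obtains w i :: "'a::{field,finite}" where "w \<noteq> 0" "\<And>x. x \<noteq> 0 \<Longrightarrow> \<exists>n. x = w ^ n" "i * i = -1" "(1::'a) \<noteq> -1"
    "\<And>c. c \<noteq> 0 \<Longrightarrow> c * w \<in> \<int> \<Longrightarrow> c * inverse w \<in> \<int> \<Longrightarrow> False"
proof -
  obtain w :: 'a where w0: "w \<noteq> 0" and wg: "\<forall>x. x \<noteq> 0 \<longrightarrow> (\<exists>n. x = w ^ n)"
    and wo: "\<forall>k. w ^ k = 1 \<longleftrightarrow> (CARD('a) - 1) dvd k"
    using gen_exists by blast
  define N where "N = CARD('a) - 1"
  obtain m where pm: "p = 2 * m + 1" using od oddE by blast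
  have p3: "p \<ge> 3" using pr od pm prime_ge_2_nat[OF pr] by presburger
  have "N = 4 * (m * m + m)" unfolding N_def card pm by (simp add: power2_eq_square algebra_simps)
  then obtain r where Nr: "N = 4 * r" by blast
  have r0: "r > 0" using Nr p3 pm \<open>N = 4 * (m * m + m)\<close> by auto
  define z where "z = w ^ (2 * r)"
  have zz: "z * z = 1" unfolding z_def using wo Nr N_def by (simp add: power_add[symmetric] mult_2[symmetric])
  have z1: "z \<noteq> 1"
  proof
    assume "z = 1"
    hence "N dvd 2 * r" using wo N_def z_def by simp
    hence "N \<le> 2 * r" using r0 by (intro dvd_imp_le) auto
    thus False using Nr r0 by simp
  qed
  have "(z - 1) * (z + 1) = 0" using zz by (simp add: algebra_simps)
  hence zm: "z = -1" using z1 by (simp add: eq_neg_iff_add_eq_0)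
  have m1: "(1::'a) \<noteq> -1" using z1 zm by simp
  define i where "i = w ^ r"
  have ii: "i * i = -1" unfolding i_def using zm z_def by (simp add: power_add[symmetric] mult_2)
  have two: "(2::'a) \<noteq> 0"
  proof
    assume "(2::'a) = 0"
    hence "1 + 1 = (0::'a)" by simp
    hence "(1::'a) = - 1" by (simp add: eq_neg_iff_add_eq_0)
    with m1 show False by simp
  qed
  have "(4::'a) = 2 * 2" by simp
  hence four: "(4::'a) \<noteq> 0" using two by (metis no_zero_divisors)
  show ?thesis
  proof (rule that[OF w0 _ ii m1])
    show "\<exists>n. x = w ^ n" if "x \<noteq> 0" for x using wg that by blast
  next
    fix c :: 'a assume c0: "c \<noteq> 0" and cw: "c * w \<in> \<int>" and cw': "c * inverse w \<in> \<int>"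
    have "c * inverse w \<noteq> 0" using c0 w0 by simp
    hence "inverse (c * inverse w) \<in> \<int>" using cw' Ints_inverse by blast
    hence "(c * w) * inverse (c * inverse w) \<in> \<int>" using cw by simp
    moreover have "(c * w) * inverse (c * inverse w) = w * w" using c0 w0 by (simp add: field_simps)
    ultimately have ww: "w * w \<in> \<int>" by metis
    have sq: "x * x \<in> \<int>" for x :: 'a
    proof (cases "x = 0")
      case False
      then obtain n where "x = w ^ n" using wg by blast
      hence "x * x = (w * w) ^ n" by (simp add: power_mult_distrib)
      thus ?thesis using ww by simp
    qed simp
    have "t \<in> \<int>" for t :: 'a
    proof -
      define h where "h = inverse (2::'a)"
      have h2: "2 * h = 1" unfolding h_def using two by simp
      have "((t+1)*h) * ((t+1)*h) - ((t-1)*h) * ((t-1)*h) = t * ((2*h) * (2*h))"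
        by (simp add: algebra_simps)
      hence "t = ((t+1)*h) * ((t+1)*h) - ((t-1)*h) * ((t-1)*h)" using h2 by simp
      also have "\<dots> \<in> \<int>" using sq by simp
      finally show ?thesis .
    qed
    hence "(\<int> :: 'a set) = UNIV" by blast
    thus False using Ints_neq_UNIV[OF card pr] by simp
  qed
qed



definition mk :: "'a \<Rightarrow> 'a \<Rightarrow> 'a \<Rightarrow> 'a \<Rightarrow> 'a::field^2^2" where
  "mk a b c d = (\<chi> i j. if i = 1 then (if j = 1 then a else b) else (if j = 1 then c else d))"

lemma two_ne_one: "(2::2) \<noteq> 1" by simp

lemma mk_nth [simp]:
  "mk a b c d $ 1 $ 1 = a" "mk a b c d $ 1 $ 2 = b" "mk a b c d $ 2 $ 1 = c" "mk a b c d $ 2 $ 2 = d"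
  by (simp_all add: mk_def)

lemma mk_eta: "(A::'a::field^2^2) = mk (A$1$1) (A$1$2) (A$2$1) (A$2$2)"
  by (simp add: vec_eq_iff forall_2)

lemma mk_eq [simp]: "mk a b c d = mk a' b' c' d' \<longleftrightarrow> a = a' \<and> b = b' \<and> c = c' \<and> d = d'"
  by (auto simp add: vec_eq_iff forall_2)

lemma mk_mult [simp]:
  "mk a b c d ** mk e f g h = mk (a*e+b*g) (a*f+b*h) (c*e+d*g) (c*f+d*h)"
  by (simp add: vec_eq_iff forall_2 matrix_matrix_mult_def sum_2)

lemma det_mk [simp]: "det (mk a b c d) = a * d - b * c"
  by (simp add: det_2)

lemma mat1_mk: "(mat 1 :: 'a::field^2^2) = mk 1 0 0 1"
  by (simp add: vec_eq_iff forall_2 mat_def)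

lemma neg_mk [simp]: "- mk a b c d = mk (-a) (-b) (-c) (-d)"
  by (simp add: vec_eq_iff forall_2)

lemma SL2_simps [simp]: "carrier SL2 = {A. det A = 1}" "mult SL2 = (**)" "one SL2 = mat 1"
  by (simp_all add: SL2_def)

lemma group_SL2: "group (SL2 :: ('a::field^2^2) monoid)"
proof (rule groupI)
  show "x \<otimes>\<^bsub>SL2\<^esub> y \<in> carrier SL2" if "x \<in> carrier SL2" "y \<in> carrier SL2" for x y :: "'a^2^2"
    using that by (simp add: det_mul)
  show "\<one>\<^bsub>SL2\<^esub> \<in> carrier (SL2 :: ('a::field^2^2) monoid)" by simp
  show "x \<otimes>\<^bsub>SL2\<^esub> y \<otimes>\<^bsub>SL2\<^esub> z = x \<otimes>\<^bsub>SL2\<^esub> (y \<otimes>\<^bsub>SL2\<^esub> z)" for x y z :: "'a^2^2"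
    by (simp add: matrix_mul_assoc)
  show "\<one>\<^bsub>SL2\<^esub> \<otimes>\<^bsub>SL2\<^esub> x = x" for x :: "'a^2^2" by simp
  show "\<exists>y\<in>carrier SL2. y \<otimes>\<^bsub>SL2\<^esub> x = \<one>\<^bsub>SL2\<^esub>" if "x \<in> carrier SL2" for x :: "'a^2^2"
  proof -
    define a where "a = x$1$1"
    define b where "b = x$1$2"
    define c where "c = x$2$1"
    define d where "d = x$2$2"
    have x: "x = mk a b c d" unfolding a_def b_def c_def d_def by (rule mk_eta)
    have "det x = 1" using that by simp
    hence dt: "a * d - b * c = 1" using x by simp
    have "mk d (-b) (-c) a \<in> carrier SL2" using dt by (simp add: algebra_simps)
    moreover have "mk d (-b) (-c) a ** x = mat 1" unfolding x mat1_mk using dt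
      by (simp add: algebra_simps)
    ultimately show ?thesis by force
  qed
qed

lemma inv_SL2:
  assumes "a * d - b * c = (1::'a::field)"
  shows "inv\<^bsub>SL2\<^esub> (mk a b c d) = mk d (-b) (-c) a"
proof -
  interpret G: group "SL2 :: ('a^2^2) monoid" by (rule group_SL2)
  show ?thesis
  proof (rule G.inv_equality)
    show "mk d (- b) (- c) a \<otimes>\<^bsub>SL2\<^esub> mk a b c d = \<one>\<^bsub>SL2\<^esub>"
      using assms by (simp add: mat1_mk algebra_simps)
    show "mk a b c d \<in> carrier SL2" using assms by simp
    show "mk d (- b) (- c) a \<in> carrier SL2" using assms by (simp add: algebra_simps)
  qed
qed

lemma negI_l [simp]: "(- mat 1 :: 'a::field^2^2) ** A = - A"
  by (simp add: vec_eq_iff forall_2 matrix_matrix_mult_def sum_2 mat_def)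

lemma negI_r [simp]: "A ** (- mat 1 :: 'a::field^2^2) = - A"
  by (simp add: vec_eq_iff forall_2 matrix_matrix_mult_def sum_2 mat_def)

definition Zc :: "('a::field^2^2) set" where "Zc = {mat 1, - mat 1}"

lemma Zc_mk: "Zc = {mk 1 0 0 1, mk (-1) 0 0 (-1)}"
  by (simp add: Zc_def mat1_mk)

lemma normal_Zc: "Zc \<lhd> (SL2 :: ('a::field^2^2) monoid)"
proof -
  interpret G: group "SL2 :: ('a^2^2) monoid" by (rule group_SL2)
  have sub: "subgroup Zc (SL2 :: ('a^2^2) monoid)"
  proof (rule G.subgroupI)
    show "Zc \<subseteq> carrier (SL2 :: ('a^2^2) monoid)" by (auto simp: Zc_mk)
    show "Zc \<noteq> {}" by (simp add: Zc_def)
    show "inv\<^bsub>SL2\<^esub> a \<in> Zc" if "a \<in> Zc" for a :: "'a^2^2"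
      using that by (auto simp: Zc_mk inv_SL2)
    show "a \<otimes>\<^bsub>SL2\<^esub> b \<in> Zc" if "a \<in> Zc" "b \<in> Zc" for a b :: "'a^2^2"
      using that by (auto simp: Zc_mk)
  qed
  show ?thesis
  proof (rule G.normalI[OF sub], intro ballI)
    fix x :: "'a^2^2" assume "x \<in> carrier SL2"
    show "Zc #>\<^bsub>SL2\<^esub> x = x <#\<^bsub>SL2\<^esub> Zc"
      unfolding r_coset_def l_coset_def Zc_def by simp
  qed
qed

definition piP :: "('a::field^2^2) \<Rightarrow> ('a^2^2) set" where
  "piP A = Zc #>\<^bsub>SL2\<^esub> A"

lemma piP_eq: "piP A = {A, - A}"
  unfolding piP_def r_coset_def Zc_def by (simp add: insert_commute)

lemma group_PSL2: "group (PSL2 :: ('a::field^2^2) set monoid)"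
  unfolding PSL2_def Zc_def[symmetric] by (rule normal.factorgroup_is_group[OF normal_Zc])

lemma piP_hom: "piP \<in> hom SL2 (PSL2 :: ('a::field^2^2) set monoid)"
  unfolding PSL2_def Zc_def[symmetric] using normal.r_coset_hom_Mod[OF normal_Zc]
  by (simp add: piP_def[abs_def])

lemma group_hom_piP: "group_hom SL2 (PSL2 :: ('a::field^2^2) set monoid) piP"
  by (simp add: group_hom_def group_hom_axioms_def group_SL2 group_PSL2 piP_hom)

lemma carrier_PSL2: "carrier (PSL2 :: ('a::field^2^2) set monoid) = piP ` carrier SL2"
  unfolding PSL2_def Zc_def[symmetric] FactGroup_def RCOSETS_def piP_def by (simp add: image_def) blast

lemma one_PSL2: "\<one>\<^bsub>PSL2\<^esub> = piP (mat 1 :: 'a::field^2^2)"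
  unfolding PSL2_def Zc_def[symmetric] FactGroup_def by (simp add: piP_eq Zc_def)

lemma piP_mult: "A \<in> carrier SL2 \<Longrightarrow> B \<in> carrier SL2 \<Longrightarrow>
   piP (A ** B) = piP A \<otimes>\<^bsub>PSL2\<^esub> piP (B :: 'a::field^2^2)"
  using hom_mult[OF piP_hom, of A B] by simp

lemma piP_inj_mod: "piP A = piP B \<Longrightarrow> A = B \<or> A = - B"
proof -
  assume "piP A = piP B"
  hence "A \<in> {B, - B}" by (metis insertI1 piP_eq)
  thus ?thesis by simp
qed

lemma img_subgroup:
  assumes "subgroup T (SL2 :: ('a::field^2^2) monoid)"
  shows "subgroup (piP ` T) (PSL2 :: ('a^2^2) set monoid)"
  using group_hom.subgroup_img_is_subgroup[OF group_hom_piP assms] .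

lemma img_mem:
  assumes "\<And>B. B \<in> T \<Longrightarrow> - B \<in> T" "piP A \<in> piP ` T"
  shows "A \<in> (T :: ('a::field^2^2) set)"
proof -
  from assms(2) obtain B where "B \<in> T" "piP A = piP B" by blast
  thus ?thesis using piP_inj_mod assms(1) by blast
qed





definition xm :: "'a::field \<Rightarrow> 'a^2^2" where "xm t = mk 1 t 0 1"
definition ym :: "'a::field \<Rightarrow> 'a^2^2" where "ym t = mk 1 0 t 1"
definition hm :: "'a::field \<Rightarrow> 'a^2^2" where "hm e = mk e 0 0 (inverse e)"

lemma xm_add: "xm a ** xm b = xm (a + b)" by (simp add: xm_def add.commute)
lemma ym_add: "ym a ** ym b = ym (a + b)" by (simp add: ym_def add.commute)

lemma gen_all:
  fixes w i :: "'a::field"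
  assumes w0: "w \<noteq> 0" and wg: "\<And>x. x \<noteq> 0 \<Longrightarrow> \<exists>n. x = w ^ n"
    and ii: "i * i = -1" and m1: "(1::'a) \<noteq> -1"
    and H: "subgroup H (PSL2 :: ('a^2^2) set monoid)"
    and hx: "piP (xm 1) \<in> H" and hy: "piP (ym 1) \<in> H" and hw: "piP (hm w) \<in> H"
  shows "carrier (PSL2 :: ('a^2^2) set monoid) \<subseteq> H"
proof -
  define Q where "Q = {A :: 'a^2^2. det A = 1 \<and> piP A \<in> H}"
  have Qm: "A ** B \<in> Q" if "A \<in> Q" "B \<in> Q" for A B
  proof -
    have "piP (A ** B) = piP A \<otimes>\<^bsub>PSL2\<^esub> piP B" using that piP_mult[of A B] by (simp add: Q_def)
    moreover have "piP A \<otimes>\<^bsub>PSL2\<^esub> piP B \<in> H" using that subgroup.m_closed[OF H] by (simp add: Q_def)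
    ultimately show ?thesis using that by (simp add: Q_def det_mul)
  qed
  have Q1: "mat 1 \<in> Q" using subgroup.one_closed[OF H] one_PSL2[where 'a='a] by (simp add: Q_def)
  have xQ: "xm 1 \<in> Q" using hx by (simp add: Q_def xm_def)
  have yQ: "ym 1 \<in> Q" using hy by (simp add: Q_def ym_def)
  have wQ: "hm w \<in> Q" using hw w0 by (simp add: Q_def hm_def)
  have hpow: "hm (w ^ n) \<in> Q" for n
  proof (induction n)
    case 0 thus ?case using Q1 by (simp add: hm_def mat1_mk)
  next
    case (Suc n)
    have "hm (w ^ Suc n) = hm w ** hm (w ^ n)" by (simp add: hm_def inverse_mult_distrib)
    thus ?case using Qm[OF wQ Suc] by simp
  qed
  have hQ: "hm e \<in> Q" if "e \<noteq> 0" for e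
    using wg[OF that] hpow by blast
  have xsq: "xm (e * e) \<in> Q" for e
  proof (cases "e = 0")
    case True thus ?thesis using Q1 by (simp add: xm_def mat1_mk)
  next
    case False
    have "xm (e * e) = hm e ** xm 1 ** hm (inverse e)" using False by (simp add: hm_def xm_def)
    thus ?thesis using Qm[OF Qm[OF hQ[OF False] xQ] hQ] False by simp
  qed
  have ysq: "ym (e * e) \<in> Q" for e
  proof (cases "e = 0")
    case True thus ?thesis using Q1 by (simp add: ym_def mat1_mk)
  next
    case False
    have "ym (e * e) = hm (inverse e) ** ym 1 ** hm e" using False by (simp add: hm_def ym_def)
    thus ?thesis using Qm[OF Qm[OF hQ yQ] hQ[OF False]] False by simp
  qed
  have two: "(2::'a) \<noteq> 0"
  proof
    assume "(2::'a) = 0"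
    hence "1 + 1 = (0::'a)" by simp
    hence "(1::'a) = - 1" by (simp add: eq_neg_iff_add_eq_0)
    with m1 show False by simp
  qed
  have sos: "\<exists>u v. t = u * u + v * v" for t :: 'a
  proof -
    define h where "h = inverse (2::'a)"
    have h2: "2 * h = 1" unfolding h_def using two by simp
    have "((t+1)*h) * ((t+1)*h) + (i*(t-1)*h) * (i*(t-1)*h) = ((t+1)*h) * ((t+1)*h) + (i*i)*(((t-1)*h) * ((t-1)*h))"
      by (simp add: algebra_simps)
    also have "\<dots> = t * ((2*h) * (2*h))" using ii by (simp add: algebra_simps)
    finally show ?thesis using h2 by (metis mult_1_right)
  qed
  have xQt: "xm t \<in> Q" for t
  proof -
    obtain u v where "t = u * u + v * v" using sos by blast
    thus ?thesis using Qm[OF xsq xsq] xm_add by metis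
  qed
  have yQt: "ym t \<in> Q" for t
  proof -
    obtain u v where "t = u * u + v * v" using sos by blast
    thus ?thesis using Qm[OF ysq ysq] ym_add by metis
  qed
  have decomp: "mk a b c d \<in> Q" if dt: "a * d - b * c = 1" and c0: "c \<noteq> 0" for a b c d
  proof -
    define u where "u = (a - 1) / c"
    define v where "v = (d - 1) / c"
    have e1: "1 + u * c = a" unfolding u_def using c0 by simp
    have e2: "c * v + 1 = d" unfolding v_def using c0 by simp
    have e3: "a * v + u = b"
    proof -
      have "a * v + u = (a * (d - 1) + (a - 1)) / c" unfolding u_def v_def using c0 by (simp add: field_simps)
      also have "a * (d - 1) + (a - 1) = b * c" using dt by (simp add: algebra_simps)
      finally show ?thesis using c0 by simp
    qed
    have "xm u ** ym c ** xm v = mk (1 + u * c) ((1 + u * c) * v + u) c (c * v + 1)"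
      by (simp add: xm_def ym_def algebra_simps)
    also have "\<dots> = mk a b c d" using e1 e2 e3 by simp
    finally show ?thesis using Qm[OF Qm[OF xQt yQt] xQt] by metis
  qed
  have allQ: "A \<in> Q" if "det A = 1" for A :: "'a^2^2"
  proof -
    define a where "a = A$1$1"
    define b where "b = A$1$2"
    define c where "c = A$2$1"
    define d where "d = A$2$2"
    have A: "A = mk a b c d" unfolding a_def b_def c_def d_def by (rule mk_eta)
    have dt: "a * d - b * c = 1" using that A by simp
    show ?thesis
    proof (cases "c = 0")
      case False thus ?thesis using decomp[OF dt] A by simp
    next
      case True
      hence a0: "a \<noteq> 0" using dt by auto
      have "ym 1 ** A = mk a b (a + c) (b + d)" unfolding A by (simp add: ym_def)
      moreover have "a * (b + d) - b * (a + c) = 1" using dt by (simp add: algebra_simps)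
      ultimately have "ym 1 ** A \<in> Q" using decomp[of a "b + d" b "a + c"] a0 True by simp
      hence "ym (-1) ** (ym 1 ** A) \<in> Q" using Qm[OF yQt] by blast
      moreover have "ym (-1) ** (ym 1 ** A) = A" by (simp add: matrix_mul_assoc ym_add ym_def mat1_mk[symmetric])
      ultimately show ?thesis by simp
    qed
  qed
  have "piP A \<in> H" if "A \<in> carrier SL2" for A :: "'a^2^2"
    using allQ[of A] that by (simp add: Q_def)
  thus ?thesis unfolding carrier_PSL2[where 'a='a] by blast
qed




lemma SL2_subgroupI:
  assumes det: "\<And>a b c d. mk a b c d \<in> T \<Longrightarrow> a * d - b * c = 1"
    and one: "mk 1 0 0 1 \<in> T"
    and inv: "\<And>a b c d. mk a b c d \<in> T \<Longrightarrow> mk d (-b) (-c) a \<in> T"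
    and mul: "\<And>a b c d a' b' c' d'. mk a b c d \<in> T \<Longrightarrow> mk a' b' c' d' \<in> T \<Longrightarrow> mk a b c d ** mk a' b' c' d' \<in> T"
  shows "subgroup T (SL2 :: ('a::field^2^2) monoid)"
proof -
  interpret G: group "SL2 :: ('a^2^2) monoid" by (rule group_SL2)
  have eta: "\<exists>a b c d. A = mk a b c d" for A :: "'a^2^2" using mk_eta by blast
  show ?thesis
  proof (rule G.subgroupI)
    show "T \<subseteq> carrier SL2"
    proof
      fix A assume "A \<in> T"
      then obtain a b c d where "A = mk a b c d" "mk a b c d \<in> T" using eta by metis
      thus "A \<in> carrier SL2" using det by simp
    qed
    show "T \<noteq> {}" using one by blast
    show "inv\<^bsub>SL2\<^esub> A \<in> T" if "A \<in> T" for A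
    proof -
      obtain a b c d where "A = mk a b c d" using eta by metis
      thus ?thesis using that inv det inv_SL2 by metis
    qed
    show "A \<otimes>\<^bsub>SL2\<^esub> B \<in> T" if "A \<in> T" "B \<in> T" for A B
    proof -
      obtain a b c d where "A = mk a b c d" using eta by metis
      moreover obtain a' b' c' d' where "B = mk a' b' c' d'" using eta by metis
      ultimately show ?thesis using that mul by simp
    qed
  qed
qed

definition Low :: "('a::field^2^2) set" where "Low = {A. det A = 1 \<and> A$1$2 = 0}"
definition Upp :: "('a::field^2^2) set" where "Upp = {A. det A = 1 \<and> A$2$1 = 0}"
definition Sg :: "('a::field^2^2) set" where
  "Sg = {A. det A = 1 \<and> (\<exists>k. k \<noteq> 0 \<and> k * A$1$1 \<in> \<int> \<and> k * A$1$2 \<in> \<int> \<and> k * A$2$1 \<in> \<int> \<and> k * A$2$2 \<in> \<int>)}"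

lemma aux_one: "a * d = 1 \<Longrightarrow> a' * d' = 1 \<Longrightarrow> a * a' * (d * d') = (1::'a::field)"
  by (metis mult.assoc mult.left_commute mult_1_right)

lemma Low_sub: "subgroup Low (SL2 :: ('a::field^2^2) monoid)"
  by (rule SL2_subgroupI) (auto simp: Low_def mult.commute aux_one)

lemma Upp_sub: "subgroup Upp (SL2 :: ('a::field^2^2) monoid)"
  by (rule SL2_subgroupI) (auto simp: Upp_def mult.commute aux_one)

lemma Sg_sub: "subgroup Sg (SL2 :: ('a::field^2^2) monoid)"
proof (rule SL2_subgroupI)
  show "a * d - b * c = 1" if "mk a b c d \<in> Sg" for a b c d :: 'a using that by (simp add: Sg_def)
  show "mk 1 0 0 1 \<in> (Sg :: ('a^2^2) set)" unfolding Sg_def by (auto intro!: exI[of _ 1])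
  show "mk d (-b) (-c) a \<in> Sg" if "mk a b c d \<in> Sg" for a b c d :: 'a
  proof -
    from that obtain k where k: "k \<noteq> 0" "k * a \<in> \<int>" "k * b \<in> \<int>" "k * c \<in> \<int>" "k * d \<in> \<int>"
      and dt: "a * d - b * c = 1" by (auto simp: Sg_def)
    have "k * (-b) = - (k * b)" "k * (-c) = - (k * c)" by simp_all
    thus ?thesis using k dt unfolding Sg_def by (auto intro!: exI[of _ k] simp: algebra_simps)
  qed
  show "mk a b c d ** mk a' b' c' d' \<in> Sg" if "mk a b c d \<in> Sg" "mk a' b' c' d' \<in> Sg"
    for a b c d a' b' c' d' :: 'a
  proof -
    from that(1) obtain k where k: "k \<noteq> 0" "k * a \<in> \<int>" "k * b \<in> \<int>" "k * c \<in> \<int>" "k * d \<in> \<int>"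
      and dt: "a * d - b * c = 1" by (auto simp: Sg_def)
    from that(2) obtain l where l: "l \<noteq> 0" "l * a' \<in> \<int>" "l * b' \<in> \<int>" "l * c' \<in> \<int>" "l * d' \<in> \<int>"
      and dt': "a' * d' - b' * c' = 1" by (auto simp: Sg_def)
    have e: "(k*l) * (x*y + z*u) = (k*x)*(l*y) + (k*z)*(l*u)" for x y z u :: 'a by (simp add: algebra_simps)
    have "det (mk a b c d ** mk a' b' c' d') = 1" using dt dt' by (simp add: det_mul del: mk_mult)
    moreover have "k * l \<noteq> 0" using k l by simp
    ultimately show ?thesis using k l unfolding Sg_def mk_mult
      by (intro CollectI conjI exI[of _ "k * l"]) (simp_all only: mk_nth e Ints_add Ints_mult not_False_eq_True)
  qed
qed

lemma neg_closed:
  "A \<in> Low \<Longrightarrow> - A \<in> Low" "A \<in> Upp \<Longrightarrow> - A \<in> Upp" "A \<in> Sg \<Longrightarrow> - (A::'a::field^2^2) \<in> Sg"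
proof -
  obtain a b c d where A: "A = mk a b c d" using mk_eta by metis
  show "A \<in> Low \<Longrightarrow> - A \<in> Low" "A \<in> Upp \<Longrightarrow> - A \<in> Upp" unfolding A by (auto simp: Low_def Upp_def)
  show "A \<in> Sg \<Longrightarrow> - A \<in> Sg"
  proof -
    assume "A \<in> Sg"
    then obtain k where k: "k \<noteq> 0" "k * a \<in> \<int>" "k * b \<in> \<int>" "k * c \<in> \<int>" "k * d \<in> \<int>"
      and dt: "a * d - b * c = 1" unfolding A by (auto simp: Sg_def)
    have "k * (-a) = - (k * a)" "k * (-b) = - (k * b)" "k * (-c) = - (k * c)" "k * (-d) = - (k * d)" by simp_all
    thus ?thesis using k dt unfolding A Sg_def by (auto intro!: exI[of _ k])
  qed
qed




lemma gen_sub: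
  assumes T: "subgroup T (SL2 :: ('a::field^2^2) monoid)" and neg: "\<And>B. B \<in> T \<Longrightarrow> - B \<in> T"
    and S: "S \<subseteq> piP ` T" and A: "A \<notin> T"
  shows "piP A \<notin> generate (PSL2 :: ('a^2^2) set monoid) S"
proof
  assume "piP A \<in> generate (PSL2 :: ('a^2^2) set monoid) S"
  moreover have "generate (PSL2 :: ('a^2^2) set monoid) S \<subseteq> piP ` T"
    by (rule group.generate_subgroup_incl[OF group_PSL2 S img_subgroup[OF T]])
  ultimately have "A \<in> T" using img_mem[of T A] neg by blast
  thus False using A by simp
qed

lemma less3: "(j::nat) < 3 \<Longrightarrow> j = 0 \<or> j = 1 \<or> j = 2" by auto

lemma nth3: "(j::nat) < 3 \<Longrightarrow> ([a,b,c]!j = a \<and> j = 0) \<or> ([a,b,c]!j = b \<and> j = 1) \<or> ([a,b,c]!j = c \<and> j = 2)"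
  using less3[of j] by auto

theorem theorem2p6:
  fixes p :: nat
  assumes "Factorial_Ring.prime p"
    and "p mod 10 = 3 \<or> p mod 10 = 7"
    and "CARD('a::{field,finite}) = p ^ 2"
    and "max_irr_len (PSL2 :: ('a ^ 2 ^ 2) set monoid) = 3"
  shows "\<not> replacement_property (PSL2 :: ('a ^ 2 ^ 2) set monoid)"
proof -
  have od: "odd p" using assms(2) by presburger
  obtain w i :: 'a where w0: "w \<noteq> 0" and wg: "\<And>x. x \<noteq> 0 \<Longrightarrow> \<exists>n. x = w ^ n"
    and ii: "i * i = -1" and m1: "(1::'a) \<noteq> -1"
    and wS: "\<And>c. c \<noteq> 0 \<Longrightarrow> c * w \<in> \<int> \<Longrightarrow> c * inverse w \<in> \<int> \<Longrightarrow> False"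
    using field_facts[OF assms(3) assms(1) od] by metis
  interpret P: group "PSL2 :: ('a^2^2) set monoid" by (rule group_PSL2)
  have i0: "i \<noteq> 0" using ii m1 by auto
  define ex where "ex = piP (xm (1::'a))"
  define ey where "ey = piP (ym (1::'a))"
  define ew where "ew = piP (hm w)"
  define g where "g = piP (hm i)"
  have xL: "xm (1::'a) \<notin> Low" "xm (1::'a) \<in> Upp" "xm (1::'a) \<in> Sg"
    by (auto simp: xm_def Low_def Upp_def Sg_def intro!: exI[of _ 1])
  have yL: "ym (1::'a) \<in> Low" "ym (1::'a) \<notin> Upp" "ym (1::'a) \<in> Sg"
    by (auto simp: ym_def Low_def Upp_def Sg_def intro!: exI[of _ 1])
  have wL: "hm w \<in> Low" "hm w \<in> Upp" "hm w \<notin> Sg"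
    using w0 wS by (auto simp: hm_def Low_def Upp_def Sg_def)
  have iS: "i * inverse i = 1" using i0 by simp
  have iL: "hm i \<in> Low" "hm i \<in> Upp" "hm i \<in> Sg"
    using i0 ii iS by (auto simp: hm_def Low_def Upp_def Sg_def intro!: exI[of _ i])
  have car: "piP A \<in> carrier (PSL2 :: ('a^2^2) set monoid)" if "det A = 1" for A :: "'a^2^2"
    using that carrier_PSL2[where 'a='a] by auto
  have exc: "ex \<in> carrier PSL2" unfolding ex_def by (rule car) (simp add: xm_def)
  have eyc: "ey \<in> carrier PSL2" unfolding ey_def by (rule car) (simp add: ym_def)
  have ewc: "ew \<in> carrier PSL2" unfolding ew_def by (rule car) (simp add: hm_def w0)
  have gc: "g \<in> carrier PSL2" unfolding g_def by (rule car) (simp add: hm_def i0)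
  note Ls = Low_sub neg_closed(1)
  note Us = Upp_sub neg_closed(2)
  note Ss = Sg_sub neg_closed(3)
  define s where "s = [ex, ey, ew]"
  have gen: "generate PSL2 (set s) = carrier (PSL2 :: ('a^2^2) set monoid)"
  proof
    show "generate PSL2 (set s) \<subseteq> carrier (PSL2 :: ('a^2^2) set monoid)"
      by (rule P.generate_incl) (simp add: s_def exc eyc ewc)
    show "carrier (PSL2 :: ('a^2^2) set monoid) \<subseteq> generate PSL2 (set s)"
    proof (rule gen_all[OF w0 wg ii m1 P.generate_is_subgroup])
      show "set s \<subseteq> carrier PSL2" by (simp add: s_def exc eyc ewc)
      show "piP (xm 1) \<in> generate PSL2 (set s)" by (rule generate.incl) (simp add: s_def ex_def)
      show "piP (ym 1) \<in> generate PSL2 (set s)" by (rule generate.incl) (simp add: s_def ey_def)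
      show "piP (hm w) \<in> generate PSL2 (set s)" by (rule generate.incl) (simp add: s_def ew_def)
    qed
  qed
  have irr: "irredundant_gen_seq PSL2 s"
    unfolding irredundant_gen_seq_def
  proof (intro conjI allI impI)
    show "set s \<subseteq> carrier PSL2" by (simp add: s_def exc eyc ewc)
    show "generate PSL2 (set s) = carrier PSL2" by (rule gen)
    fix k assume k: "k < length s"
    hence "k = 0 \<or> k = 1 \<or> k = 2" using less3 by (simp add: s_def)
    thus "s ! k \<notin> generate PSL2 {s ! j |j. j < length s \<and> j \<noteq> k}"
    proof (elim disjE)
      assume k0: "k = 0"
      have "{s ! j |j. j < length s \<and> j \<noteq> k} \<subseteq> piP ` Low"
      proof
        fix y assume "y \<in> {s ! j |j. j < length s \<and> j \<noteq> k}"
        then obtain j where "y = s ! j" "j < 3" "j \<noteq> 0" using k0 by (auto simp: s_def)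
        hence "y = ey \<or> y = ew" using nth3[of j ex ey ew] by (auto simp: s_def)
        thus "y \<in> piP ` Low" using yL wL by (auto simp: ey_def ew_def)
      qed
      thus ?thesis using gen_sub[OF Ls] xL k0 by (simp add: s_def ex_def)
    next
      assume k0: "k = 1"
      have "{s ! j |j. j < length s \<and> j \<noteq> k} \<subseteq> piP ` Upp"
      proof
        fix y assume "y \<in> {s ! j |j. j < length s \<and> j \<noteq> k}"
        then obtain j where "y = s ! j" "j < 3" "j \<noteq> 1" using k0 by (auto simp: s_def)
        hence "y = ex \<or> y = ew" using nth3[of j ex ey ew] by (auto simp: s_def)
        thus "y \<in> piP ` Upp" using xL wL by (auto simp: ex_def ew_def)
      qed
      thus ?thesis using gen_sub[OF Us] yL k0 by (simp add: s_def ey_def)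
    next
      assume k0: "k = 2"
      have "{s ! j |j. j < length s \<and> j \<noteq> k} \<subseteq> piP ` Sg"
      proof
        fix y assume "y \<in> {s ! j |j. j < length s \<and> j \<noteq> k}"
        then obtain j where "y = s ! j" "j < 3" "j \<noteq> 2" using k0 by (auto simp: s_def)
        hence "y = ex \<or> y = ey" using nth3[of j ex ey ew] by (auto simp: s_def)
        thus "y \<in> piP ` Sg" using xL yL by (auto simp: ex_def ey_def)
      qed
      thus ?thesis using gen_sub[OF Ss] wL k0 by (simp add: s_def ew_def)
    qed
  qed
  have g1: "g \<noteq> \<one>\<^bsub>PSL2\<^esub>"
  proof
    assume "g = \<one>\<^bsub>PSL2\<^esub>"
    hence "piP (hm i) = piP (mat 1 :: 'a^2^2)" using one_PSL2[where 'a='a] by (simp add: g_def)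
    hence "hm i = mat 1 \<or> hm i = - mat 1" by (rule piP_inj_mod)
    hence "i = 1 \<or> i = -1" by (auto simp: hm_def mat1_mk)
    thus False using ii m1 by auto
  qed
  have nrep: "\<not> seq_replacement PSL2 s"
    unfolding seq_replacement_def
  proof
    assume "\<forall>g\<in>carrier PSL2. g \<noteq> \<one>\<^bsub>PSL2\<^esub> \<longrightarrow> (\<exists>i<length s. generate PSL2 (set (s[i := g])) = carrier PSL2)"
    then obtain k where k: "k < length s" and kg: "generate PSL2 (set (s[k := g])) = carrier PSL2"
      using gc g1 by blast
    hence "k = 0 \<or> k = 1 \<or> k = 2" using less3 by (simp add: s_def)
    thus False
    proof (elim disjE)
      assume k0: "k = 0"
      have sub: "set (s[k := g]) \<subseteq> piP ` Low" using k0 yL wL iL by (auto simp: s_def ey_def ew_def g_def)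
      show False using gen_sub[OF Ls sub xL(1)] kg exc by (simp add: ex_def)
    next
      assume k0: "k = 1"
      have sub: "set (s[k := g]) \<subseteq> piP ` Upp" using k0 xL wL iL by (auto simp: s_def ex_def ew_def g_def)
      show False using gen_sub[OF Us sub yL(2)] kg eyc by (simp add: ey_def)
    next
      assume k0: "k = 2"
      have sub: "set (s[k := g]) \<subseteq> piP ` Sg" using k0 xL yL iL by (auto simp: s_def ex_def ey_def g_def)
      show False using gen_sub[OF Ss sub wL(3)] kg ewc by (simp add: ew_def)
    qed
  qed
  show ?thesis unfolding replacement_property_def
    using irr nrep assms(4) by (auto simp: s_def)
qed


end
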